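(* Let $\langle X, \leq_1, \leq_2\rangle$ be a lattice frame, and let $L_X$ be the Urquhart complex algebra of $X$ (the complete bounded lattice of stable subsets of $X$). Let $X_{L_X}$ be the set of maximal filter–ideal pairs of $L_X$, ordered by $\leq_1$ and $\leq_2$ as in the Urquhart canonical frame. Then $X$ is embeddable into the Urquhart canonical frame $\langle X_{L_X}, \leq_1, \leq_2\rangle$: there is an injective map $k: X \to X_{L_X}$ such that for $i = 1,2$ and all $x,y \in X$, $x \leq_i y$ implies $k(x) \leq_i k(y)$.
   Context: A doubly ordered frame is a structure $\langle X, \leq_1, \leq_2\rangle$ where $\leq_1,\leq_2$ are quasiorders (reflexive and transitive relations) on $X$ such that $x \leq_1 y$ and $x \leq_2 y$ together imply $x = y$. Write $\uparrow_i x = \{y : x \leq_i y\}$. A lattice frame is a doubly ordered frame satisfying: (LF1) each element of $X$ is below a $\leq_1$-maximal element and below a $\leq_2$-maximal element; (LF2) if $x \not\leq_1 y$ then there is $z$ with $y \leq_1 z$ such that for all $w$, $x \leq_1 w$ implies $z \not\leq_2 w$; (LF3) if $x \not\leq_2 y$ then there is $z$ with $y \leq_2 z$ such that for all $w$, $x \leq_2 w$ implies $z \not\leq_1 w$. For $Y \subseteq X$ let $l(Y) = \{x : \uparrow_1 x \cap Y = \emptyset\}$ and $r(Y) = \{x : \uparrow_2 x \cap Y = \emptyset\}$. $Y$ is stable if $Y = l(r(Y))$; $L_X$ is the set of stable sets, with operations $Y \wedge Z = Y \cap Z$ and $Y \vee Z = l(r(Y \cup Z))$, bottom $\emptyset$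 and top $X$; this is a complete bounded lattice (the Urquhart complex algebra of $X$). For a bounded lattice $L$, a filter–ideal pair is $\langle F, I\rangle$ with $F$ a proper filter, $I$ a proper ideal, and $F \cap I = \emptyset$. It is maximal if no proper filter strictly containing $F$ is disjoint from $I$ and no proper ideal strictly containing $I$ is disjoint from $F$. For a maximal pair $x = \langle F, I\rangle$ write $x_1 = F$, $x_2 = I$. The Urquhart canonical frame of $L$ is $\langle X_L, \leq_1, \leq_2\rangle$, where $X_L$ is the set of maximal filter–ideal pairs and $x \leq_i y$ iff $x_i \subseteq y_i$. *)

theory Defs
  imports Main
begin

definition quasiorder_on :: "'a set \<Rightarrow> ('a \<Rightarrow> 'a \<Rightarrow> bool) \<Rightarrow> bool" where
  "quasiorder_on X le \<longleftrightarrow>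
     (\<forall>x\<in>X. le x x) \<and> (\<forall>x\<in>X. \<forall>y\<in>X. \<forall>z\<in>X. le x y \<longrightarrow> le y z \<longrightarrow> le x z)"

definition doubly_ordered_frame ::
  "'a set \<Rightarrow> ('a \<Rightarrow> 'a \<Rightarrow> bool) \<Rightarrow> ('a \<Rightarrow> 'a \<Rightarrow> bool) \<Rightarrow> bool" where
  "doubly_ordered_frame X le1 le2 \<longleftrightarrow>
     quasiorder_on X le1 \<and> quasiorder_on X le2 \<and>
     (\<forall>x\<in>X. \<forall>y\<in>X. le1 x y \<longrightarrow> le2 x y \<longrightarrow> x = y)"

definition qmaximal :: "'a set \<Rightarrow> ('a \<Rightarrow> 'a \<Rightarrow> bool) \<Rightarrow> 'a \<Rightarrow> bool" where
  "qmaximal X le m \<longleftrightarrow> m \<in> X \<and> (\<forall>z\<in>X. le m z \<longrightarrow> le z m)"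

definition lattice_frame ::
  "'a set \<Rightarrow> ('a \<Rightarrow> 'a \<Rightarrow> bool) \<Rightarrow> ('a \<Rightarrow> 'a \<Rightarrow> bool) \<Rightarrow> bool" where
  "lattice_frame X le1 le2 \<longleftrightarrow>
     doubly_ordered_frame X le1 le2 \<and>
     \<comment> \<open>LF1\<close>
     (\<forall>x\<in>X. (\<exists>m. qmaximal X le1 m \<and> le1 x m) \<and> (\<exists>m. qmaximal X le2 m \<and> le2 x m)) \<and>
     \<comment> \<open>LF2\<close>
     (\<forall>x\<in>X. \<forall>y\<in>X. \<not> le1 x y \<longrightarrow>
        (\<exists>z\<in>X. le1 y z \<and> (\<forall>w\<in>X. le1 x w \<longrightarrow> \<not> le2 z w))) \<and>
     \<comment> \<open>LF3\<close>
     (\<forall>x\<in>X. \<forall>y\<in>X. \<not> le2 x y \<longrightarrow>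
        (\<exists>z\<in>X. le2 y z \<and> (\<forall>w\<in>X. le2 x w \<longrightarrow> \<not> le1 z w)))"

definition up :: "'a set \<Rightarrow> ('a \<Rightarrow> 'a \<Rightarrow> bool) \<Rightarrow> 'a \<Rightarrow> 'a set" where
  "up X le x = {y \<in> X. le x y}"

definition lop :: "'a set \<Rightarrow> ('a \<Rightarrow> 'a \<Rightarrow> bool) \<Rightarrow> 'a set \<Rightarrow> 'a set" where
  "lop X le1 Y = {x \<in> X. up X le1 x \<inter> Y = {}}"

definition rop :: "'a set \<Rightarrow> ('a \<Rightarrow> 'a \<Rightarrow> bool) \<Rightarrow> 'a set \<Rightarrow> 'a set" where
  "rop X le2 Y = {x \<in> X. up X le2 x \<inter> Y = {}}"

definition stable_sets ::
  "'a set \<Rightarrow> ('a \<Rightarrow> 'a \<Rightarrow> bool) \<Rightarrow> ('a \<Rightarrow> 'a \<Rightarrow> bool) \<Rightarrow> 'a set set" where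
  "stable_sets X le1 le2 = {Y. Y \<subseteq> X \<and> Y = lop X le1 (rop X le2 Y)}"

definition sjoin ::
  "'a set \<Rightarrow> ('a \<Rightarrow> 'a \<Rightarrow> bool) \<Rightarrow> ('a \<Rightarrow> 'a \<Rightarrow> bool) \<Rightarrow> 'a set \<Rightarrow> 'a set \<Rightarrow> 'a set" where
  "sjoin X le1 le2 Y Z = lop X le1 (rop X le2 (Y \<union> Z))"

definition lat_filter :: "'b set \<Rightarrow> ('b \<Rightarrow> 'b \<Rightarrow> bool) \<Rightarrow> ('b \<Rightarrow> 'b \<Rightarrow> 'b) \<Rightarrow> 'b set \<Rightarrow> bool" where
  "lat_filter L le meet F \<longleftrightarrow> F \<subseteq> L \<and> F \<noteq> {} \<and>
     (\<forall>a\<in>F. \<forall>b\<in>L. le a b \<longrightarrow> b \<in> F) \<and> (\<forall>a\<in>F. \<forall>b\<in>F. meet a b \<in> F)"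

definition lat_ideal :: "'b set \<Rightarrow> ('b \<Rightarrow> 'b \<Rightarrow> bool) \<Rightarrow> ('b \<Rightarrow> 'b \<Rightarrow> 'b) \<Rightarrow> 'b set \<Rightarrow> bool" where
  "lat_ideal L le join I \<longleftrightarrow> I \<subseteq> L \<and> I \<noteq> {} \<and>
     (\<forall>a\<in>I. \<forall>b\<in>L. le b a \<longrightarrow> b \<in> I) \<and> (\<forall>a\<in>I. \<forall>b\<in>I. join a b \<in> I)"

definition proper_filter ::
  "'b set \<Rightarrow> ('b \<Rightarrow> 'b \<Rightarrow> bool) \<Rightarrow> ('b \<Rightarrow> 'b \<Rightarrow> 'b) \<Rightarrow> 'b set \<Rightarrow> bool" where
  "proper_filter L le meet F \<longleftrightarrow> lat_filter L le meet F \<and> F \<noteq> L"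

definition proper_ideal ::
  "'b set \<Rightarrow> ('b \<Rightarrow> 'b \<Rightarrow> bool) \<Rightarrow> ('b \<Rightarrow> 'b \<Rightarrow> 'b) \<Rightarrow> 'b set \<Rightarrow> bool" where
  "proper_ideal L le join I \<longleftrightarrow> lat_ideal L le join I \<and> I \<noteq> L"

definition filter_ideal_pair ::
  "'b set \<Rightarrow> ('b \<Rightarrow> 'b \<Rightarrow> bool) \<Rightarrow> ('b \<Rightarrow> 'b \<Rightarrow> 'b) \<Rightarrow> ('b \<Rightarrow> 'b \<Rightarrow> 'b)
    \<Rightarrow> 'b set \<times> 'b set \<Rightarrow> bool" where
  "filter_ideal_pair L le meet join p \<longleftrightarrow>
     proper_filter L le meet (fst p) \<and> proper_ideal L le join (snd p) \<and>
     fst p \<inter> snd p = {}"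

definition maximal_fi_pair ::
  "'b set \<Rightarrow> ('b \<Rightarrow> 'b \<Rightarrow> bool) \<Rightarrow> ('b \<Rightarrow> 'b \<Rightarrow> 'b) \<Rightarrow> ('b \<Rightarrow> 'b \<Rightarrow> 'b)
    \<Rightarrow> 'b set \<times> 'b set \<Rightarrow> bool" where
  "maximal_fi_pair L le meet join p \<longleftrightarrow>
     filter_ideal_pair L le meet join p \<and>
     (\<forall>G. proper_filter L le meet G \<and> fst p \<subset> G \<longrightarrow> G \<inter> snd p \<noteq> {}) \<and>
     (\<forall>J. proper_ideal L le join J \<and> snd p \<subset> J \<longrightarrow> fst p \<inter> J \<noteq> {})"

definition canonical_points_of_complex_algebra ::
  "'a set \<Rightarrow> ('a \<Rightarrow> 'a \<Rightarrow> bool) \<Rightarrow> ('a \<Rightarrow> 'a \<Rightarrow> bool) \<Rightarrow> ('a set set \<times> 'a set set) set" where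
  "canonical_points_of_complex_algebra X le1 le2 =
     {p. maximal_fi_pair (stable_sets X le1 le2) (\<subseteq>) (\<inter>) (sjoin X le1 le2) p}"

definition can_le1 :: "'b set \<times> 'b set \<Rightarrow> 'b set \<times> 'b set \<Rightarrow> bool" where
  "can_le1 p q \<longleftrightarrow> fst p \<subseteq> fst q"

definition can_le2 :: "'b set \<times> 'b set \<Rightarrow> 'b set \<times> 'b set \<Rightarrow> bool" where
  "can_le2 p q \<longleftrightarrow> snd p \<subseteq> snd q"

end

theory Submission
  imports Defs
begin

locale LFr =
  fixes X :: "'a set" and le1 le2 :: "'a \<Rightarrow> 'a \<Rightarrow> bool"
  assumes lf: "lattice_frame X le1 le2"
begin

abbreviation "L \<equiv> stable_sets X le1 le2"
abbreviation "l \<equiv> lop X le1"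
abbreviation "r \<equiv> rop X le2"

lemma dof: "doubly_ordered_frame X le1 le2" using lf unfolding lattice_frame_def by simp
lemma q1: "quasiorder_on X le1" using dof unfolding doubly_ordered_frame_def by simp
lemma q2: "quasiorder_on X le2" using dof unfolding doubly_ordered_frame_def by simp
lemma refl1: "x \<in> X \<Longrightarrow> le1 x x" using q1 unfolding quasiorder_on_def by simp
lemma refl2: "x \<in> X \<Longrightarrow> le2 x x" using q2 unfolding quasiorder_on_def by simp
lemma trans1: "x \<in> X \<Longrightarrow> y \<in> X \<Longrightarrow> z \<in> X \<Longrightarrow> le1 x y \<Longrightarrow> le1 y z \<Longrightarrow> le1 x z"
  using q1 unfolding quasiorder_on_def by meson
lemma trans2: "x \<in> X \<Longrightarrow> y \<in> X \<Longrightarrow> z \<in> X \<Longrightarrow> le2 x y \<Longrightarrow> le2 y z \<Longrightarrow> le2 x z"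
  using q2 unfolding quasiorder_on_def by meson
lemma anti: "x \<in> X \<Longrightarrow> y \<in> X \<Longrightarrow> le1 x y \<Longrightarrow> le2 x y \<Longrightarrow> x = y"
  using dof unfolding doubly_ordered_frame_def by meson
lemma LF2: "x \<in> X \<Longrightarrow> y \<in> X \<Longrightarrow> \<not> le1 x y \<Longrightarrow>
        (\<exists>z\<in>X. le1 y z \<and> (\<forall>w\<in>X. le1 x w \<longrightarrow> \<not> le2 z w))"
  using lf unfolding lattice_frame_def by meson
lemma LF3: "x \<in> X \<Longrightarrow> y \<in> X \<Longrightarrow> \<not> le2 x y \<Longrightarrow>
        (\<exists>z\<in>X. le2 y z \<and> (\<forall>w\<in>X. le2 x w \<longrightarrow> \<not> le1 z w))"
  using lf unfolding lattice_frame_def by meson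

lemma l_mem: "x \<in> l Y \<longleftrightarrow> x \<in> X \<and> (\<forall>y\<in>X. le1 x y \<longrightarrow> y \<notin> Y)"
  unfolding lop_def up_def by blast
lemma r_mem: "x \<in> r Y \<longleftrightarrow> x \<in> X \<and> (\<forall>y\<in>X. le2 x y \<longrightarrow> y \<notin> Y)"
  unfolding rop_def up_def by blast
lemma up_mem: "y \<in> up X le x \<longleftrightarrow> y \<in> X \<and> le x y" unfolding up_def by blast

lemma stable_iff: "Y \<in> L \<longleftrightarrow> Y \<subseteq> X \<and> Y = l (r Y)"
  unfolding stable_sets_def by blast

lemma l_anti: "A \<subseteq> B \<Longrightarrow> l B \<subseteq> l A" by (auto simp: subset_eq l_mem)
lemma r_anti: "A \<subseteq> B \<Longrightarrow> r B \<subseteq> r A" by (auto simp: subset_eq r_mem)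

lemma stable_up: "Y \<in> L \<Longrightarrow> y \<in> Y \<Longrightarrow> z \<in> X \<Longrightarrow> le1 y z \<Longrightarrow> z \<in> Y"
proof -
  assume a: "Y \<in> L" "y \<in> Y" "z \<in> X" "le1 y z"
  have e: "l (r Y) = Y" using a(1) stable_iff by auto
  have "y \<in> l (r Y)" using e a(2) by simp
  hence y: "y \<in> X" "\<forall>w\<in>X. le1 y w \<longrightarrow> w \<notin> r Y" unfolding l_mem by auto
  have "\<forall>w\<in>X. le1 z w \<longrightarrow> w \<notin> r Y"
  proof (intro ballI impI)
    fix w assume "w \<in> X" "le1 z w"
    hence "le1 y w" using trans1[OF y(1) a(3)] a(4) by blast
    thus "w \<notin> r Y" using y \<open>w \<in> X\<close> by blast
  qed
  hence "z \<in> l (r Y)" unfolding l_mem using a(3) by blast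
  thus ?thesis using e by simp
qed

lemma r_up: "x \<in> r Y \<Longrightarrow> z \<in> X \<Longrightarrow> le2 x z \<Longrightarrow> z \<in> r Y"
  unfolding r_mem by (meson trans2)

lemma up_sub_lr: "W \<subseteq> X \<Longrightarrow> (\<And>y z. y \<in> W \<Longrightarrow> z \<in> X \<Longrightarrow> le1 y z \<Longrightarrow> z \<in> W) \<Longrightarrow> W \<subseteq> l (r W)"
  unfolding subset_eq l_mem r_mem by (meson refl2)

lemma X_stable: "X \<in> L"
proof -
  have "r X = {}" unfolding set_eq_iff r_mem using refl2 by blast
  moreover have "l {} = X" unfolding set_eq_iff l_mem by blast
  ultimately show ?thesis using stable_iff by auto
qed

lemma empty_stable: "{} \<in> L"
proof -
  have "r {} = X" unfolding set_eq_iff r_mem by blast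
  moreover have "l X = {}" unfolding set_eq_iff l_mem using refl1 by blast
  ultimately show ?thesis using stable_iff by auto
qed

lemma meet_stable: "Y \<in> L \<Longrightarrow> Z \<in> L \<Longrightarrow> Y \<inter> Z \<in> L"
proof -
  assume a: "Y \<in> L" "Z \<in> L"
  have sY: "Y \<subseteq> X" "l (r Y) = Y" using a(1) stable_iff by auto
  have sZ: "Z \<subseteq> X" "l (r Z) = Z" using a(2) stable_iff by auto
  have "l (r (Y \<inter> Z)) \<subseteq> l (r Y)" by (rule l_anti, rule r_anti) blast
  moreover have "l (r (Y \<inter> Z)) \<subseteq> l (r Z)" by (rule l_anti, rule r_anti) blast
  ultimately have 1: "l (r (Y \<inter> Z)) \<subseteq> Y \<inter> Z" using sY sZ by simp
  have 2: "Y \<inter> Z \<subseteq> l (r (Y \<inter> Z))"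
  proof (rule up_sub_lr)
    show "Y \<inter> Z \<subseteq> X" using sY by blast
    fix y z assume "y \<in> Y \<inter> Z" "z \<in> X" "le1 y z"
    thus "z \<in> Y \<inter> Z" using stable_up[OF a(1)] stable_up[OF a(2)] by blast
  qed
  have "Y \<inter> Z \<subseteq> X" using sY by blast
  thus ?thesis unfolding stable_iff using 1 2 by blast
qed

lemma r_sub_rl:
  assumes AX: "A \<subseteq> X" and up: "\<And>a b. a \<in> A \<Longrightarrow> b \<in> X \<Longrightarrow> le2 a b \<Longrightarrow> b \<in> A"
  shows "A \<subseteq> r (l A)"
proof
  fix a assume a: "a \<in> A"
  have "\<forall>v\<in>X. le2 a v \<longrightarrow> v \<notin> l A"
  proof (intro ballI impI)
    fix v assume v: "v \<in> X" "le2 a v"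
    have "v \<in> A" using up[OF a v] .
    moreover have "le1 v v" using refl1 v(1) .
    ultimately show "v \<notin> l A" unfolding l_mem using v(1) by blast
  qed
  thus "a \<in> r (l A)" unfolding r_mem using a AX by blast
qed

lemma r_X: "r A \<subseteq> X" by (auto simp: r_mem)
lemma l_X: "l A \<subseteq> X" by (auto simp: l_mem)

lemma join_stable: "Y \<in> L \<Longrightarrow> Z \<in> L \<Longrightarrow> sjoin X le1 le2 Y Z \<in> L"
proof -
  assume a: "Y \<in> L" "Z \<in> L"
  let ?W = "Y \<union> Z"
  have up: "\<And>y z. y \<in> ?W \<Longrightarrow> z \<in> X \<Longrightarrow> le1 y z \<Longrightarrow> z \<in> ?W"
    using stable_up[OF a(1)] stable_up[OF a(2)] by blast
  have "r (l (r ?W)) = r ?W"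
  proof
    show "r ?W \<subseteq> r (l (r ?W))"
      by (rule r_sub_rl[OF r_X]) (rule r_up)
    show "r (l (r ?W)) \<subseteq> r ?W"
    proof
      fix y assume y: "y \<in> r (l (r ?W))"
      show "y \<in> r ?W"
      proof (rule ccontr)
        assume "y \<notin> r ?W"
        moreover have "y \<in> X" using y r_X by blast
        ultimately obtain w where w: "w \<in> X" "le2 y w" "w \<in> ?W" unfolding r_mem by blast
        have "\<forall>v\<in>X. le1 w v \<longrightarrow> v \<notin> r ?W"
        proof (intro ballI impI)
          fix v assume v: "v \<in> X" "le1 w v"
          have "v \<in> ?W" using up[OF w(3) v] .
          thus "v \<notin> r ?W" unfolding r_mem using refl2[OF v(1)] v(1) by blast
        qed
        hence "w \<in> l (r ?W)" unfolding l_mem using w(1) by blast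
        thus False using y w(1,2) unfolding r_mem by blast
      qed
    qed
  qed
  hence "l (r (l (r ?W))) = l (r ?W)" by simp
  thus ?thesis unfolding sjoin_def stable_iff using l_X by auto
qed

lemma up1_stable: "x \<in> X \<Longrightarrow> up X le1 x \<in> L"
proof -
  assume x: "x \<in> X"
  have "l (r (up X le1 x)) = up X le1 x"
  proof
    show "l (r (up X le1 x)) \<subseteq> up X le1 x"
    proof
      fix y assume y: "y \<in> l (r (up X le1 x))"
      have yX: "y \<in> X" using y l_X by blast
      show "y \<in> up X le1 x"
      proof (rule ccontr)
        assume "y \<notin> up X le1 x"
        hence "\<not> le1 x y" unfolding up_mem using yX by blast
        then obtain z where z: "z \<in> X" "le1 y z" "\<forall>w\<in>X. le1 x w \<longrightarrow> \<not> le2 z w" using LF2 x yX by blast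
        have "\<forall>w\<in>X. le2 z w \<longrightarrow> w \<notin> up X le1 x" unfolding up_mem using z(3) by blast
        hence "z \<in> r (up X le1 x)" unfolding r_mem using z(1) by blast
        thus False using y z(1,2) unfolding l_mem by blast
      qed
    qed
    show "up X le1 x \<subseteq> l (r (up X le1 x))"
    proof (rule up_sub_lr)
      show "up X le1 x \<subseteq> X" by (auto simp: up_mem)
      fix y z assume "y \<in> up X le1 x" "z \<in> X" "le1 y z"
      thus "z \<in> up X le1 x" unfolding up_mem using x trans1 by blast
    qed
  qed
  moreover have "up X le1 x \<subseteq> X" by (auto simp: up_mem)
  ultimately show ?thesis unfolding stable_iff by auto
qed

lemma rl_up2: "x \<in> X \<Longrightarrow> r (l (up X le2 x)) = up X le2 x"
proof
  assume x: "x \<in> X"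
  show "r (l (up X le2 x)) \<subseteq> up X le2 x"
  proof
    fix y assume y: "y \<in> r (l (up X le2 x))"
    have yX: "y \<in> X" using y r_X by blast
    show "y \<in> up X le2 x"
    proof (rule ccontr)
      assume "y \<notin> up X le2 x"
      hence "\<not> le2 x y" unfolding up_mem using yX by blast
      then obtain z where z: "z \<in> X" "le2 y z" "\<forall>w\<in>X. le2 x w \<longrightarrow> \<not> le1 z w" using LF3 x yX by blast
      have "\<forall>w\<in>X. le1 z w \<longrightarrow> w \<notin> up X le2 x" unfolding up_mem using z(3) by blast
      hence "z \<in> l (up X le2 x)" unfolding l_mem using z(1) by blast
      thus False using y z(1,2) unfolding r_mem by blast
    qed
  qed
  show "up X le2 x \<subseteq> r (l (up X le2 x))"
  proof (rule r_sub_rl)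
    show "up X le2 x \<subseteq> X" by (auto simp: up_mem)
    fix a b assume "a \<in> up X le2 x" "b \<in> X" "le2 a b"
    thus "b \<in> up X le2 x" unfolding up_mem using x trans2 by blast
  qed
qed

lemma l_up2_stable: "x \<in> X \<Longrightarrow> l (up X le2 x) \<in> L"
  using rl_up2 l_X unfolding stable_iff by auto

definition "kk x = ({Y \<in> L. x \<in> Y}, {Y \<in> L. x \<in> r Y})"

lemma x_up: "x \<in> X \<Longrightarrow> x \<in> up X le x \<longleftrightarrow> le x x" by (simp add: up_mem)

lemma kk_point: assumes x: "x \<in> X"
  shows "maximal_fi_pair L (\<subseteq>) (\<inter>) (sjoin X le1 le2) (kk x)"
proof -
  let ?F = "{Y \<in> L. x \<in> Y}" and ?I = "{Y \<in> L. x \<in> r Y}"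
  have xrE: "x \<in> r {}" using x by (simp add: r_mem)
  have xrX: "x \<notin> r X" using x refl2 by (auto simp: r_mem)
  have pf: "proper_filter L (\<subseteq>) (\<inter>) ?F"
    unfolding proper_filter_def lat_filter_def
    using X_stable empty_stable meet_stable x by blast
  have pi: "proper_ideal L (\<subseteq>) (sjoin X le1 le2) ?I"
    unfolding proper_ideal_def lat_ideal_def
  proof (intro conjI ballI impI)
    show "?I \<subseteq> L" by blast
    show "?I \<noteq> {}" using empty_stable xrE by blast
    show "?I \<noteq> L" using X_stable xrX by blast
    fix a b assume "a \<in> ?I" "b \<in> L" "b \<subseteq> a"
    thus "b \<in> ?I" using r_anti by blast
  next
    fix a b assume ab: "a \<in> ?I" "b \<in> ?I"
    have "x \<in> r (a \<union> b)" using ab by (auto simp: r_mem)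
    moreover have "r (a \<union> b) \<subseteq> r (l (r (a \<union> b)))"
      by (rule r_sub_rl[OF r_X]) (rule r_up)
    ultimately show "sjoin X le1 le2 a b \<in> ?I" using join_stable ab unfolding sjoin_def by blast
  qed
  have disj: "?F \<inter> ?I = {}" using x refl2 by (auto simp: r_mem)
  have mf: "\<forall>G. proper_filter L (\<subseteq>) (\<inter>) G \<and> ?F \<subset> G \<longrightarrow> G \<inter> ?I \<noteq> {}"
  proof (intro allI impI)
    fix G assume G: "proper_filter L (\<subseteq>) (\<inter>) G \<and> ?F \<subset> G"
    have GL: "G \<subseteq> L" using G unfolding proper_filter_def lat_filter_def by blast
    obtain Y where "Y \<in> G" "Y \<notin> ?F" using G by blast
    hence Y: "Y \<in> G" "x \<notin> Y" using GL by blast+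
    have "x \<in> up X le1 x" using x refl1 x_up by blast
    hence "up X le1 x \<in> ?F" using up1_stable x by blast
    hence "up X le1 x \<in> G" using G by blast
    hence m: "Y \<inter> up X le1 x \<in> G" using G Y unfolding proper_filter_def lat_filter_def by blast
    hence "Y \<inter> up X le1 x \<in> L" using G unfolding proper_filter_def lat_filter_def by blast
    moreover have "x \<in> r (Y \<inter> up X le1 x)" 
    proof -
      have "\<forall>w\<in>X. le2 x w \<longrightarrow> w \<notin> Y \<inter> up X le1 x"
      proof (intro ballI impI)
        fix w assume w: "w \<in> X" "le2 x w"
        show "w \<notin> Y \<inter> up X le1 x"
        proof
          assume "w \<in> Y \<inter> up X le1 x"
          hence "w \<in> Y" "le1 x w" by (auto simp: up_mem)
          hence "w = x" using anti x w by blast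
          thus False using Y \<open>w \<in> Y\<close> by blast
        qed
      qed
      thus ?thesis using x by (simp add: r_mem)
    qed
    ultimately show "G \<inter> ?I \<noteq> {}" using m by blast
  qed
  have mi: "\<forall>J. proper_ideal L (\<subseteq>) (sjoin X le1 le2) J \<and> ?I \<subset> J \<longrightarrow> ?F \<inter> J \<noteq> {}"
  proof (intro allI impI)
    fix J assume J: "proper_ideal L (\<subseteq>) (sjoin X le1 le2) J \<and> ?I \<subset> J"
    have JL: "J \<subseteq> L" using J unfolding proper_ideal_def lat_ideal_def by blast
    obtain Y where "Y \<in> J" "Y \<notin> ?I" using J by blast
    hence Y: "Y \<in> J" "x \<notin> r Y" using JL by blast+
    let ?Z = "l (up X le2 x)"
    have Zs: "?Z \<in> L" using l_up2_stable x .
    have "x \<in> up X le2 x" using x refl2 x_up by blast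
    hence "x \<in> r ?Z" using rl_up2 x by simp
    hence "?Z \<in> J" using Zs J by blast
    hence j: "sjoin X le1 le2 Y ?Z \<in> J" using J Y unfolding proper_ideal_def lat_ideal_def by blast
    hence "sjoin X le1 le2 Y ?Z \<in> L" using J unfolding proper_ideal_def lat_ideal_def by blast
    moreover have "x \<in> sjoin X le1 le2 Y ?Z"
    proof -
      have "\<forall>v\<in>X. le1 x v \<longrightarrow> v \<notin> r (Y \<union> ?Z)"
      proof (intro ballI impI)
        fix v assume v: "v \<in> X" "le1 x v"
        show "v \<notin> r (Y \<union> ?Z)"
        proof
          assume vr: "v \<in> r (Y \<union> ?Z)"
          have "r (Y \<union> ?Z) \<subseteq> r ?Z" by (rule r_anti) blast
          hence "v \<in> r ?Z" using vr by blast
          hence "v \<in> up X le2 x" using rl_up2 x by simp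
          hence "le2 x v" by (simp add: up_mem)
          hence "v = x" using anti x v by blast
          moreover have "r (Y \<union> ?Z) \<subseteq> r Y" by (rule r_anti) blast
          ultimately have "x \<in> r Y" using vr by blast
          thus False using Y by blast
        qed
      qed
      thus ?thesis unfolding sjoin_def using x by (simp add: l_mem)
    qed
    ultimately show "?F \<inter> J \<noteq> {}" using j by blast
  qed
  show ?thesis unfolding maximal_fi_pair_def filter_ideal_pair_def kk_def fst_conv snd_conv
    using pf pi disj mf mi by blast
qed

lemma main:
  "\<exists>k. k ` X \<subseteq> canonical_points_of_complex_algebra X le1 le2 \<and> inj_on k X \<and>
           (\<forall>x\<in>X. \<forall>y\<in>X. le1 x y \<longrightarrow> can_le1 (k x) (k y)) \<and>
           (\<forall>x\<in>X. \<forall>y\<in>X. le2 x y \<longrightarrow> can_le2 (k x) (k y))"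
proof (intro exI[of _ kk] conjI)
  show "kk ` X \<subseteq> canonical_points_of_complex_algebra X le1 le2"
    unfolding canonical_points_of_complex_algebra_def using kk_point by blast
  show "inj_on kk X"
  proof (rule inj_onI)
    fix x y assume xy: "x \<in> X" "y \<in> X" "kk x = kk y"
    have "x \<in> up X le1 x" using xy refl1 x_up by blast
    hence "up X le1 x \<in> {Y \<in> L. x \<in> Y}" using up1_stable xy by blast
    hence "y \<in> up X le1 x" using xy unfolding kk_def by auto
    hence 1: "le1 x y" by (simp add: up_mem)
    have "x \<in> up X le2 x" using xy refl2 x_up by blast
    hence "x \<in> r (l (up X le2 x))" using rl_up2 xy by simp
    hence "l (up X le2 x) \<in> {Y \<in> L. x \<in> r Y}" using l_up2_stable xy by blast
    hence "y \<in> r (l (up X le2 x))" using xy unfolding kk_def by auto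
    hence "y \<in> up X le2 x" using rl_up2 xy by simp
    hence "le2 x y" by (simp add: up_mem)
    thus "x = y" using 1 anti xy by blast
  qed
  show "\<forall>x\<in>X. \<forall>y\<in>X. le1 x y \<longrightarrow> can_le1 (kk x) (kk y)"
    unfolding can_le1_def kk_def using stable_up by auto
  show "\<forall>x\<in>X. \<forall>y\<in>X. le2 x y \<longrightarrow> can_le2 (kk x) (kk y)"
    unfolding can_le2_def kk_def using r_up by auto
qed

end

theorem mainTheorem1:
  fixes X :: "'a set" and le1 le2 :: "'a \<Rightarrow> 'a \<Rightarrow> bool"
  assumes "lattice_frame X le1 le2"
  shows "\<exists>k. k ` X \<subseteq> canonical_points_of_complex_algebra X le1 le2 \<and> inj_on k X \<and>
           (\<forall>x\<in>X. \<forall>y\<in>X. le1 x y \<longrightarrow> can_le1 (k x) (k y)) \<and>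
           (\<forall>x\<in>X. \<forall>y\<in>X. le2 x y \<longrightarrow> can_le2 (k x) (k y))"
  using LFr.main[OF LFr.intro[OF assms]] .

end
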